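(* Let $(\mathcal C,\otimes,I,\top)$ be a pseudo-purifiable discard category. Then the relation $\preceq$ on each hom-set $\mathcal C(A,B)$ is reflexive and transitive, and it is preserved by composition and monoidal product: if $f\preceq f'$ in $\mathcal C(A,B)$ and $g\preceq g'$ in $\mathcal C(B,C)$ then $g\circ f\preceq g'\circ f'$, and if $f\preceq f'$ in $\mathcal C(A,B)$, $g\preceq g'$ in $\mathcal C(A',B')$ then $f\otimes g\preceq f'\otimes g'$. Hence $\preceq$ is a preorder enrichment of $\mathcal C$.
   Context: Monoidal categories are treated as strict; $\sigma$ is the symmetry. A discard category is a symmetric monoidal category $(\mathcal C,\otimes,I)$ with, for every object $A$, a morphism $\top_A:A\to I$ such that $\top_I=\mathrm{id}_I$ and $\top_{A\otimes B}=\top_A\otimes\top_B$. A morphism $f:A\to B$ is causal if $\top_B\circ f=\top_A$. For $f,g\in\mathcal C(A,B)$, $f\preceq g$ iff there are an object $X$, $g_0\in\mathcal C(A,B\otimes X)$ and $f_0\in\mathcal C(X,I)$ with $f=(\mathrm{id}_B\otimes f_0)\circ g_0$ and $g=(\mathrm{id}_B\otimes\top_X)\circ g_0$. A morphism $p\in\mathcal C(A,B\otimes X)$ is a pseudo-purification of $f\in\mathcal C(A,B)$, written $p\in\mathrm{Pure}(f)$, if for every object $Y$ and every $g\in\mathcal C(A,B\otimes Y)$ with $f=(\mathrm{id}_B\otimes\top_Y)\circ g$ there exists a causal $c\in\mathcal C(X,Y)$ with $g=(\mathrm{id}_B\otimes c)\circ p$. The category is pseudo-purifiable if every morphism has a pseudo-purification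 and, for all $f_1\in\mathcal C(A_1,B_1\otimes C)$, $f_2\in\mathcal C(C\otimes A_2,B_2)$, $p_1\in\mathrm{Pure}(f_1)$ with $p_1:A_1\to B_1\otimes C\otimes X_1$ and $p_2\in\mathrm{Pure}(f_2)$ with $p_2:C\otimes A_2\to B_2\otimes X_2$, the morphism $q:=(\mathrm{id}_{B_1\otimes B_2}\otimes\sigma_{X_2,X_1})\circ(\mathrm{id}_{B_1}\otimes p_2\otimes\mathrm{id}_{X_1})\circ(\mathrm{id}_{B_1\otimes C}\otimes\sigma_{X_1,A_2})\circ(p_1\otimes\mathrm{id}_{A_2}):A_1\otimes A_2\to B_1\otimes B_2\otimes X_1\otimes X_2$ is a pseudo-purification of $(\mathrm{id}_{B_1}\otimes f_2)\circ(f_1\otimes\mathrm{id}_{A_2})$. *)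

theory Defs
  imports Main
begin

text \<open>Objects are all elements of type 'o; morphisms are the elements of the set arr
  of type 'm, each with a domain and codomain. Composition cmp g f means g after f.\<close>

record ('o, 'm) smcat =
  arr :: "'m set"
  dom_of :: "'m \<Rightarrow> 'o"
  cod_of :: "'m \<Rightarrow> 'o"
  cmp :: "'m \<Rightarrow> 'm \<Rightarrow> 'm"
  idm :: "'o \<Rightarrow> 'm"
  otens :: "'o \<Rightarrow> 'o \<Rightarrow> 'o"
  mtens :: "'m \<Rightarrow> 'm \<Rightarrow> 'm"
  unit_obj :: "'o"
  symm :: "'o \<Rightarrow> 'o \<Rightarrow> 'm"
  disc :: "'o \<Rightarrow> 'm"

definition hom :: "('o, 'm) smcat \<Rightarrow> 'o \<Rightarrow> 'o \<Rightarrow> 'm set" where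
  "hom C A B = {f \<in> arr C. dom_of C f = A \<and> cod_of C f = B}"

locale discard_category =
  fixes C :: "('o, 'm) smcat"
  assumes comp_hom: "\<And>A B D f g. f \<in> hom C A B \<Longrightarrow> g \<in> hom C B D \<Longrightarrow> cmp C g f \<in> hom C A D"
    and id_hom: "\<And>A. idm C A \<in> hom C A A"
    and id_left: "\<And>A B f. f \<in> hom C A B \<Longrightarrow> cmp C (idm C B) f = f"
    and id_right: "\<And>A B f. f \<in> hom C A B \<Longrightarrow> cmp C f (idm C A) = f"
    and comp_assoc: "\<And>A B D E f g h. f \<in> hom C A B \<Longrightarrow> g \<in> hom C B D \<Longrightarrow> h \<in> hom C D E
        \<Longrightarrow> cmp C h (cmp C g f) = cmp C (cmp C h g) f"
    and otens_assoc: "\<And>A B D. otens C (otens C A B) D = otens C A (otens C B D)"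
    and otens_unit_left: "\<And>A. otens C (unit_obj C) A = A"
    and otens_unit_right: "\<And>A. otens C A (unit_obj C) = A"
    and tens_hom: "\<And>A B A' B' f g. f \<in> hom C A B \<Longrightarrow> g \<in> hom C A' B'
        \<Longrightarrow> mtens C f g \<in> hom C (otens C A A') (otens C B B')"
    and tens_id: "\<And>A B. mtens C (idm C A) (idm C B) = idm C (otens C A B)"
    and tens_interchange: "\<And>A B D A' B' D' f g f' g'. f \<in> hom C A B \<Longrightarrow> g \<in> hom C B D
        \<Longrightarrow> f' \<in> hom C A' B' \<Longrightarrow> g' \<in> hom C B' D'
        \<Longrightarrow> mtens C (cmp C g f) (cmp C g' f') = cmp C (mtens C g g') (mtens C f f')"
    and tens_assoc: "\<And>f g h. f \<in> arr C \<Longrightarrow> g \<in> arr C \<Longrightarrow> h \<in> arr C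
        \<Longrightarrow> mtens C (mtens C f g) h = mtens C f (mtens C g h)"
    and tens_unit_left: "\<And>f. f \<in> arr C \<Longrightarrow> mtens C (idm C (unit_obj C)) f = f"
    and tens_unit_right: "\<And>f. f \<in> arr C \<Longrightarrow> mtens C f (idm C (unit_obj C)) = f"
    and symm_hom: "\<And>A B. symm C A B \<in> hom C (otens C A B) (otens C B A)"
    and symm_natural: "\<And>A B A' B' f g. f \<in> hom C A B \<Longrightarrow> g \<in> hom C A' B'
        \<Longrightarrow> cmp C (symm C B B') (mtens C f g) = cmp C (mtens C g f) (symm C A A')"
    and symm_inv: "\<And>A B. cmp C (symm C B A) (symm C A B) = idm C (otens C A B)"
    and symm_hexagon: "\<And>A B D. symm C A (otens C B D)
        = cmp C (mtens C (idm C B) (symm C A D)) (mtens C (symm C A B) (idm C D))"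
    and disc_hom: "\<And>A. disc C A \<in> hom C A (unit_obj C)"
    and disc_unit: "disc C (unit_obj C) = idm C (unit_obj C)"
    and disc_tens: "\<And>A B. disc C (otens C A B) = mtens C (disc C A) (disc C B)"

definition causal :: "('o, 'm) smcat \<Rightarrow> 'o \<Rightarrow> 'o \<Rightarrow> 'm \<Rightarrow> bool" where
  "causal C A B f \<longleftrightarrow> f \<in> hom C A B \<and> cmp C (disc C B) f = disc C A"

definition preceq :: "('o, 'm) smcat \<Rightarrow> 'o \<Rightarrow> 'o \<Rightarrow> 'm \<Rightarrow> 'm \<Rightarrow> bool" where
  "preceq C A B f g \<longleftrightarrow> f \<in> hom C A B \<and> g \<in> hom C A B \<and>
     (\<exists>X g0 f0. g0 \<in> hom C A (otens C B X) \<and> f0 \<in> hom C X (unit_obj C) \<and>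
        f = cmp C (mtens C (idm C B) f0) g0 \<and>
        g = cmp C (mtens C (idm C B) (disc C X)) g0)"

definition Pure :: "('o, 'm) smcat \<Rightarrow> 'o \<Rightarrow> 'o \<Rightarrow> 'o \<Rightarrow> 'm \<Rightarrow> 'm \<Rightarrow> bool" where
  "Pure C A B X f p \<longleftrightarrow> f \<in> hom C A B \<and> p \<in> hom C A (otens C B X) \<and>
     (\<forall>Y g. g \<in> hom C A (otens C B Y) \<and> f = cmp C (mtens C (idm C B) (disc C Y)) g \<longrightarrow>
        (\<exists>c. causal C X Y c \<and> g = cmp C (mtens C (idm C B) c) p))"

definition pseudo_purifiable :: "('o, 'm) smcat \<Rightarrow> bool" where
  "pseudo_purifiable C \<longleftrightarrow>
     (\<forall>A B f. f \<in> hom C A B \<longrightarrow> (\<exists>X p. Pure C A B X f p)) \<and>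
     (\<forall>A1 B1 D A2 B2 X1 X2 f1 f2 p1 p2.
        f1 \<in> hom C A1 (otens C B1 D) \<longrightarrow> f2 \<in> hom C (otens C D A2) B2 \<longrightarrow>
        Pure C A1 (otens C B1 D) X1 f1 p1 \<longrightarrow> Pure C (otens C D A2) B2 X2 f2 p2 \<longrightarrow>
        Pure C (otens C A1 A2) (otens C B1 B2) (otens C X1 X2)
          (cmp C (mtens C (idm C B1) f2) (mtens C f1 (idm C A2)))
          (cmp C (mtens C (idm C (otens C B1 B2)) (symm C X2 X1))
            (cmp C (mtens C (mtens C (idm C B1) p2) (idm C X1))
              (cmp C (mtens C (idm C (otens C B1 D)) (symm C X1 A2))
                (mtens C p1 (idm C A2))))))"

end

theory Submission
  imports Defs
begin

lemma pp1: "pseudo_purifiable C \<Longrightarrow> f \<in> hom C A B \<Longrightarrow> \<exists>X p. Pure C A B X f p"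
  unfolding pseudo_purifiable_def by (drule conjunct1) blast
lemma pp2: "pseudo_purifiable C \<Longrightarrow> f1 \<in> hom C A1 (otens C B1 D) \<Longrightarrow> f2 \<in> hom C (otens C D A2) B2 \<Longrightarrow>
        Pure C A1 (otens C B1 D) X1 f1 p1 \<Longrightarrow> Pure C (otens C D A2) B2 X2 f2 p2 \<Longrightarrow>
        Pure C (otens C A1 A2) (otens C B1 B2) (otens C X1 X2)
          (cmp C (mtens C (idm C B1) f2) (mtens C f1 (idm C A2)))
          (cmp C (mtens C (idm C (otens C B1 B2)) (symm C X2 X1))
            (cmp C (mtens C (mtens C (idm C B1) p2) (idm C X1))
              (cmp C (mtens C (idm C (otens C B1 D)) (symm C X1 A2))
                (mtens C p1 (idm C A2)))))"
  unfolding pseudo_purifiable_def by (drule conjunct2) blast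
lemma pure_hom: "Pure C A B X f p \<Longrightarrow> f \<in> hom C A B \<and> p \<in> hom C A (otens C B X)"
  unfolding Pure_def by (elim conjE) (intro conjI)
lemma prec_hom: "preceq C A B f g \<Longrightarrow> f \<in> hom C A B \<and> g \<in> hom C A B"
  unfolding preceq_def by (elim conjE) (intro conjI)
lemma prec_intro: "f \<in> hom C A B \<Longrightarrow> g \<in> hom C A B \<Longrightarrow> g0 \<in> hom C A (otens C B X) \<Longrightarrow>
  f0 \<in> hom C X (unit_obj C) \<Longrightarrow> f = cmp C (mtens C (idm C B) f0) g0 \<Longrightarrow>
  g = cmp C (mtens C (idm C B) (disc C X)) g0 \<Longrightarrow> preceq C A B f g"
  unfolding preceq_def by blast
lemma prec_elim: "preceq C A B f g \<Longrightarrow> (\<And>X g0 f0. g0 \<in> hom C A (otens C B X) \<Longrightarrow>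
  f0 \<in> hom C X (unit_obj C) \<Longrightarrow> f = cmp C (mtens C (idm C B) f0) g0 \<Longrightarrow>
  g = cmp C (mtens C (idm C B) (disc C X)) g0 \<Longrightarrow> P) \<Longrightarrow> P"
  unfolding preceq_def by blast
lemma pure_univ: "Pure C A B X f p \<Longrightarrow> g \<in> hom C A (otens C B Y) \<Longrightarrow> f = cmp C (mtens C (idm C B) (disc C Y)) g
  \<Longrightarrow> \<exists>c. causal C X Y c \<and> g = cmp C (mtens C (idm C B) c) p"
  unfolding Pure_def by blast

context discard_category begin

declare otens_assoc[simp] otens_unit_left[simp] otens_unit_right[simp]

lemma hom_arr: "f \<in> hom C A B \<Longrightarrow> f \<in> arr C" by (simp add: hom_def)

lemma tul: "f \<in> hom C A B \<Longrightarrow> mtens C (idm C (unit_obj C)) f = f"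
  using tens_unit_left hom_arr by blast
lemma tur: "f \<in> hom C A B \<Longrightarrow> mtens C f (idm C (unit_obj C)) = f"
  using tens_unit_right hom_arr by blast

lemma whisk_hom: "a \<in> hom C U V \<Longrightarrow> mtens C (idm C B) a \<in> hom C (otens C B U) (otens C B V)"
  using tens_hom[OF id_hom] by blast

lemma whisk_comp: "a \<in> hom C U V \<Longrightarrow> b \<in> hom C V W \<Longrightarrow>
  cmp C (mtens C (idm C B) b) (mtens C (idm C B) a) = mtens C (idm C B) (cmp C b a)"
  using tens_interchange[OF id_hom id_hom, of a U V b W B] id_left[OF id_hom, of B] by simp

lemma whisk_assoc: "a \<in> hom C U V \<Longrightarrow> b \<in> hom C V W \<Longrightarrow> x \<in> hom C S (otens C B U) \<Longrightarrow>
  cmp C (mtens C (idm C B) b) (cmp C (mtens C (idm C B) a) x) = cmp C (mtens C (idm C B) (cmp C b a)) x"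
  using comp_assoc[OF _ whisk_hom whisk_hom, of x S B U a V b W] whisk_comp[of a U V b W B] by simp

lemma symm_unit_r: "symm C A (unit_obj C) = idm C A"
proof -
  let ?I = "unit_obj C"
  let ?s = "symm C A ?I" let ?t = "symm C ?I A"
  have s: "?s \<in> hom C A A" using symm_hom[of A ?I] by simp
  have t: "?t \<in> hom C A A" using symm_hom[of ?I A] by simp
  have ss: "?s = cmp C ?s ?s" using symm_hexagon[of A ?I ?I] s by (simp add: tul tur)
  have ts: "cmp C ?t ?s = idm C A" using symm_inv[of ?I A] by simp
  have "cmp C ?t ?s = cmp C (cmp C ?t ?s) ?s" using comp_assoc[OF s s t] ss by simp
  then show ?thesis using ts id_left[OF s] by simp
qed

lemma symm_unit_l: "symm C (unit_obj C) A = idm C A"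
proof -
  have t: "symm C (unit_obj C) A \<in> hom C A A" using symm_hom[of "unit_obj C" A] by simp
  have "cmp C (symm C (unit_obj C) A) (idm C A) = idm C A"
    using symm_inv[of "unit_obj C" A] symm_unit_r by simp
  then show ?thesis using id_right[OF t] by simp
qed

lemma hom_iff: "f \<in> hom C A B \<longleftrightarrow> f \<in> arr C \<and> dom_of C f = A \<and> cod_of C f = B"
  by (simp add: hom_def)

lemma pure_dil: assumes P: "Pure C A B Z h p"
  shows "h = cmp C (mtens C (idm C B) (disc C Z)) p"
proof -
  let ?I = "unit_obj C"
  have h: "h \<in> hom C A B" and p: "p \<in> hom C A (otens C B Z)" using pure_hom[OF P] by blast+
  have h': "h \<in> hom C A (otens C B ?I)" using h by simp
  have "h = cmp C (mtens C (idm C B) (disc C ?I)) h"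
    using id_left[OF h] by (simp add: disc_unit tens_id)
  then obtain c where c: "causal C Z ?I c" and hc: "h = cmp C (mtens C (idm C B) c) p"
    using pure_univ[OF P h'] by blast
  have c1: "c \<in> hom C Z ?I" and c2: "cmp C (disc C ?I) c = disc C Z" using c unfolding causal_def by blast+
  have "c = disc C Z" using c2 id_left[OF c1] disc_unit by simp
  then show ?thesis using hc by simp
qed

lemma pure_fact: assumes P: "Pure C A B Z h p" and fh: "preceq C A B f h"
  shows "\<exists>e\<in>hom C Z (unit_obj C). f = cmp C (mtens C (idm C B) e) p"
proof -
  have p: "p \<in> hom C A (otens C B Z)" using pure_hom[OF P] by blast
  obtain X g0 f0 where g0: "g0 \<in> hom C A (otens C B X)" and f0: "f0 \<in> hom C X (unit_obj C)"
    and f: "f = cmp C (mtens C (idm C B) f0) g0" and h: "h = cmp C (mtens C (idm C B) (disc C X)) g0"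
    using fh by (rule prec_elim)
  obtain c where c: "causal C Z X c" and gc: "g0 = cmp C (mtens C (idm C B) c) p"
    using pure_univ[OF P g0 h] by blast
  have c': "c \<in> hom C Z X" using c unfolding causal_def by blast
  have "f = cmp C (mtens C (idm C B) (cmp C f0 c)) p"
    using f gc whisk_assoc[OF c' f0 p] by simp
  moreover have "cmp C f0 c \<in> hom C Z (unit_obj C)" using comp_hom[OF c' f0] .
  ultimately show ?thesis by blast
qed

lemma pure_prec: assumes P: "Pure C A B Z h p" and e: "e \<in> hom C Z (unit_obj C)"
  and f: "f = cmp C (mtens C (idm C B) e) p"
  shows "preceq C A B f h"
proof -
  have h: "h \<in> hom C A B" and p: "p \<in> hom C A (otens C B Z)" using pure_hom[OF P] by blast+
  have fh: "f \<in> hom C A B" using f comp_hom[OF p whisk_hom[OF e, of B]] by simp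
  show ?thesis by (rule prec_intro[OF fh h p e f pure_dil[OF P]])
qed

lemma prec_refl: assumes f: "f \<in> hom C A B" shows "preceq C A B f f"
proof -
  have f': "f \<in> hom C A (otens C B (unit_obj C))" using f by simp
  have e1: "f = cmp C (mtens C (idm C B) (idm C (unit_obj C))) f"
    using id_left[OF f] by (simp add: tens_id)
  then have e2: "f = cmp C (mtens C (idm C B) (disc C (unit_obj C))) f" by (simp add: disc_unit)
  show ?thesis by (rule prec_intro[OF f f f' id_hom e1 e2])
qed


lemma prec_trans: assumes pp: "pseudo_purifiable C" and fg: "preceq C A B f g"
  and gh: "preceq C A B g h" shows "preceq C A B f h"
proof -
  let ?I = "unit_obj C"
  have hh: "h \<in> hom C A B" using prec_hom[OF gh] by blast
  obtain Z p where P: "Pure C A B Z h p" using pp1[OF pp hh] by blast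
  have p: "p \<in> hom C A (otens C B Z)" using pure_hom[OF P] by blast
  obtain e where e: "e \<in> hom C Z ?I" and ge: "g = cmp C (mtens C (idm C B) e) p"
    using pure_fact[OF P gh] by blast
  obtain X1 p1 where P1: "Pure C A (otens C B Z) X1 p p1"
    using pp1[OF pp p] by blast
  have e': "e \<in> hom C (otens C Z ?I) ?I" using e by simp
  obtain X2 p2 where P2: "Pure C (otens C Z ?I) ?I X2 e p2"
    using pp1[OF pp e'] by blast
  have p1: "p1 \<in> hom C A (otens C B (otens C Z X1))" using pure_hom[OF P1] by simp
  have p2: "p2 \<in> hom C Z X2" using pure_hom[OF P2] by simp
  note comb = pp2[OF pp p e' P1 P2]
  define b where "b = mtens C p2 (idm C X1)"
  define s where "s = symm C X2 X1"
  have b: "b \<in> hom C (otens C Z X1) (otens C X2 X1)" unfolding b_def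
    using tens_hom[OF p2 id_hom[of X1]] by simp
  have s: "s \<in> hom C (otens C X2 X1) (otens C X1 X2)" unfolding s_def using symm_hom by simp
  define r where "r = cmp C s b"
  have r: "r \<in> hom C (otens C Z X1) (otens C X1 X2)" unfolding r_def using comp_hom[OF b s] .
  have p1a: "p1 \<in> arr C" using p1 hom_arr by blast
  have e3: "mtens C (idm C (otens C B Z)) (symm C X1 ?I) = idm C (otens C (otens C B Z) X1)"
    by (simp add: symm_unit_r tens_id)
  have e1: "mtens C p (idm C ?I) = p" using tur[OF p] .
  have e2: "mtens C p1 (idm C ?I) = p1" using tur[OF p1] .
  have e4: "cmp C (idm C (otens C (otens C B Z) X1)) p1 = p1" using id_left[OF p1] by simp
  have e5: "mtens C (mtens C (idm C B) p2) (idm C X1) = mtens C (idm C B) b"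
    unfolding b_def by (rule tens_assoc[OF hom_arr[OF id_hom] hom_arr[OF p2] hom_arr[OF id_hom]])
  have e6: "idm C (otens C B ?I) = idm C B" by simp
  have Q: "Pure C A B (otens C X1 X2) g (cmp C (mtens C (idm C B) s) (cmp C (mtens C (idm C B) b) p1))"
    by (rule comb[unfolded e1 e2 e3 e6 e4 e5 otens_unit_right, unfolded ge[symmetric], unfolded s_def[symmetric]])
  then have Q': "Pure C A B (otens C X1 X2) g (cmp C (mtens C (idm C B) r) p1)"
    unfolding r_def using whisk_assoc[OF b s p1] by simp
  obtain k where k: "k \<in> hom C (otens C X1 X2) ?I" and fk: "f = cmp C (mtens C (idm C B) k) (cmp C (mtens C (idm C B) r) p1)"
    using pure_fact[OF Q' fg] by blast
  have f1: "f = cmp C (mtens C (idm C B) (cmp C k r)) p1" using fk whisk_assoc[OF r k p1] by simp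
  have pd: "p = cmp C (mtens C (idm C (otens C B Z)) (disc C X1)) p1" using pure_dil[OF P1] .
  have hd: "h = cmp C (mtens C (idm C B) (disc C Z)) p" using pure_dil[OF P] .
  have dx: "mtens C (idm C Z) (disc C X1) \<in> hom C (otens C Z X1) Z"
    using whisk_hom[OF disc_hom[of X1], of Z] by simp
  have "mtens C (idm C (otens C B Z)) (disc C X1) = mtens C (idm C B) (mtens C (idm C Z) (disc C X1))"
    unfolding tens_id[of B Z, symmetric] by (rule tens_assoc[OF hom_arr[OF id_hom] hom_arr[OF id_hom] hom_arr[OF disc_hom]])
  then have h2: "h = cmp C (mtens C (idm C B) (cmp C (disc C Z) (mtens C (idm C Z) (disc C X1)))) p1"
    using hd pd whisk_assoc[OF dx disc_hom p1] by simp
  have "mtens C (cmp C (disc C Z) (idm C Z)) (cmp C (idm C ?I) (disc C X1))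
     = cmp C (mtens C (disc C Z) (idm C ?I)) (mtens C (idm C Z) (disc C X1))"
    by (rule tens_interchange[OF id_hom disc_hom disc_hom id_hom])
  then have "cmp C (disc C Z) (mtens C (idm C Z) (disc C X1)) = disc C (otens C Z X1)"
    using id_right[OF disc_hom] id_left[OF disc_hom] tur[OF disc_hom] disc_tens by simp
  then have h3: "h = cmp C (mtens C (idm C B) (disc C (otens C Z X1))) p1" using h2 by simp
  obtain c where c: "causal C Z (otens C Z X1) c" and pc: "p1 = cmp C (mtens C (idm C B) c) p"
    using pure_univ[OF P p1 h3] by blast
  have c': "c \<in> hom C Z (otens C Z X1)" using c unfolding causal_def by blast
  have kr: "cmp C k r \<in> hom C (otens C Z X1) ?I" using comp_hom[OF r k] .
  have "f = cmp C (mtens C (idm C B) (cmp C k r)) (cmp C (mtens C (idm C B) c) p)"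
    unfolding f1 pc ..
  also have "\<dots> = cmp C (mtens C (idm C B) (cmp C (cmp C k r) c)) p"
    by (rule whisk_assoc[OF c' kr p])
  finally have fin: "f = cmp C (mtens C (idm C B) (cmp C (cmp C k r) c)) p" .
  show ?thesis by (rule pure_prec[OF P comp_hom[OF c' kr] fin])
qed

lemma comp_dil:
  assumes F: "F \<in> hom C A (otens C B X)" and G: "G \<in> hom C B (otens C D Y)"
    and e1: "e1 \<in> hom C Y (unit_obj C)" and e2: "e2 \<in> hom C X (unit_obj C)"
  shows "cmp C (mtens C (idm C D) (mtens C e1 e2)) (cmp C (mtens C G (idm C X)) F)
       = cmp C (cmp C (mtens C (idm C D) e1) G) (cmp C (mtens C (idm C B) e2) F)"
proof -
  let ?I = "unit_obj C"
  define g where "g = cmp C (mtens C (idm C D) e1) G"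
  have w1: "mtens C (idm C D) e1 \<in> hom C (otens C D Y) D" using whisk_hom[OF e1, of D] by simp
  have g: "g \<in> hom C B D" unfolding g_def using comp_hom[OF G w1] .
  have a1: "mtens C (idm C D) (mtens C e1 e2) = mtens C (mtens C (idm C D) e1) e2"
    using tens_assoc[OF hom_arr[OF id_hom] hom_arr[OF e1] hom_arr[OF e2]] by simp
  have GX: "mtens C G (idm C X) \<in> hom C (otens C B X) (otens C D (otens C Y X))"
    using tens_hom[OF G id_hom[of X]] by simp
  have i1: "mtens C (cmp C (mtens C (idm C D) e1) G) (cmp C e2 (idm C X))
     = cmp C (mtens C (mtens C (idm C D) e1) e2) (mtens C G (idm C X))"
    by (rule tens_interchange[OF G w1 id_hom e2])
  have i2: "mtens C (cmp C g (idm C B)) (cmp C (idm C ?I) e2)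
     = cmp C (mtens C g (idm C ?I)) (mtens C (idm C B) e2)"
    by (rule tens_interchange[OF id_hom g e2 id_hom])
  have c1: "cmp C (mtens C (idm C D) (mtens C e1 e2)) (mtens C G (idm C X)) = cmp C g (mtens C (idm C B) e2)"
    using i1 i2 unfolding a1 g_def[symmetric]
    using id_right[OF e2] id_left[OF e2] id_right[OF g] tur[OF g] by simp
  have w2: "mtens C (idm C D) (mtens C e1 e2) \<in> hom C (otens C D (otens C Y X)) D"
    using whisk_hom[OF tens_hom[OF e1 e2], of D] by simp
  have "cmp C (mtens C (idm C D) (mtens C e1 e2)) (cmp C (mtens C G (idm C X)) F)
     = cmp C (cmp C (mtens C (idm C D) (mtens C e1 e2)) (mtens C G (idm C X))) F"
    using comp_assoc[OF F GX w2] .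
  also have "\<dots> = cmp C (cmp C g (mtens C (idm C B) e2)) F" using c1 by simp
  also have "\<dots> = cmp C g (cmp C (mtens C (idm C B) e2) F)"
    using comp_assoc[OF F _ g, of "mtens C (idm C B) e2"] whisk_hom[OF e2, of B] by simp
  finally show ?thesis unfolding g_def .
qed

lemma prec_comp: assumes ff: "preceq C A B f f'" and gg: "preceq C B D g g'"
  shows "preceq C A D (cmp C g f) (cmp C g' f')"
proof -
  obtain X F f0 where F: "F \<in> hom C A (otens C B X)" and f0: "f0 \<in> hom C X (unit_obj C)"
    and f: "f = cmp C (mtens C (idm C B) f0) F" and f': "f' = cmp C (mtens C (idm C B) (disc C X)) F"
    using ff by (rule prec_elim)
  obtain Y G g0 where G: "G \<in> hom C B (otens C D Y)" and g0: "g0 \<in> hom C Y (unit_obj C)"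
    and g: "g = cmp C (mtens C (idm C D) g0) G" and g': "g' = cmp C (mtens C (idm C D) (disc C Y)) G"
    using gg by (rule prec_elim)
  have fh: "f \<in> hom C A B" "f' \<in> hom C A B" using prec_hom[OF ff] by auto
  have gh: "g \<in> hom C B D" "g' \<in> hom C B D" using prec_hom[OF gg] by auto
  have W: "cmp C (mtens C G (idm C X)) F \<in> hom C A (otens C D (otens C Y X))"
    using comp_hom[OF F tens_hom[OF G id_hom[of X]]] by simp
  have h0: "mtens C g0 f0 \<in> hom C (otens C Y X) (unit_obj C)" using tens_hom[OF g0 f0] by simp
  have E1: "cmp C g f = cmp C (mtens C (idm C D) (mtens C g0 f0)) (cmp C (mtens C G (idm C X)) F)"
    using comp_dil[OF F G g0 f0] f g by simp
  have E2: "cmp C g' f' = cmp C (mtens C (idm C D) (disc C (otens C Y X))) (cmp C (mtens C G (idm C X)) F)"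
    using comp_dil[OF F G disc_hom disc_hom] f' g' disc_tens by simp
  show ?thesis
    by (rule prec_intro[OF comp_hom[OF fh(1) gh(1)] comp_hom[OF fh(2) gh(2)] W h0 E1 E2])
qed

lemma rw_dil:
  assumes F: "F \<in> hom C A (otens C B X)" and e: "e \<in> hom C X (unit_obj C)"
  shows "cmp C (mtens C (idm C (otens C B A')) e) (cmp C (mtens C (idm C B) (symm C X A')) (mtens C F (idm C A')))
       = mtens C (cmp C (mtens C (idm C B) e) F) (idm C A')"
proof -
  let ?I = "unit_obj C"
  have ae: "mtens C (idm C A') e \<in> hom C (otens C A' X) A'" using whisk_hom[OF e, of A'] by simp
  have sx: "symm C X A' \<in> hom C (otens C X A') (otens C A' X)" using symm_hom .
  have FA: "mtens C F (idm C A') \<in> hom C (otens C A A') (otens C B (otens C X A'))"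
    using tens_hom[OF F id_hom[of A']] by simp
  have a1: "mtens C (idm C (otens C B A')) e = mtens C (idm C B) (mtens C (idm C A') e)"
    unfolding tens_id[of B A', symmetric] by (rule tens_assoc[OF hom_arr[OF id_hom] hom_arr[OF id_hom] hom_arr[OF e]])
  have ea: "mtens C e (idm C A') \<in> hom C (otens C X A') A'" using tens_hom[OF e id_hom[of A']] by simp
  have nat: "cmp C (symm C ?I A') (mtens C e (idm C A')) = cmp C (mtens C (idm C A') e) (symm C X A')"
    using symm_natural[OF e id_hom[of A']] .
  have n2: "cmp C (mtens C (idm C A') e) (symm C X A') = mtens C e (idm C A')"
    using nat symm_unit_l id_left[OF ea] by simp
  have "cmp C (mtens C (idm C (otens C B A')) e) (cmp C (mtens C (idm C B) (symm C X A')) (mtens C F (idm C A')))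
     = cmp C (mtens C (idm C B) (mtens C e (idm C A'))) (mtens C F (idm C A'))"
    unfolding a1 using whisk_assoc[OF sx ae FA] n2 by simp
  also have "mtens C (idm C B) (mtens C e (idm C A')) = mtens C (mtens C (idm C B) e) (idm C A')"
    using tens_assoc[OF hom_arr[OF id_hom] hom_arr[OF e] hom_arr[OF id_hom]] by simp
  also have "cmp C (mtens C (mtens C (idm C B) e) (idm C A')) (mtens C F (idm C A'))
       = mtens C (cmp C (mtens C (idm C B) e) F) (cmp C (idm C A') (idm C A'))"
    using tens_interchange[OF F whisk_hom[OF e, of B] id_hom id_hom] by simp
  also have "cmp C (idm C A') (idm C A') = idm C A'" using id_left[OF id_hom] .
  finally show ?thesis .
qed

lemma prec_rw: assumes ff: "preceq C A B f f'"
  shows "preceq C (otens C A A') (otens C B A') (mtens C f (idm C A')) (mtens C f' (idm C A'))"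
proof -
  obtain X F f0 where F: "F \<in> hom C A (otens C B X)" and f0: "f0 \<in> hom C X (unit_obj C)"
    and f: "f = cmp C (mtens C (idm C B) f0) F" and f': "f' = cmp C (mtens C (idm C B) (disc C X)) F"
    using ff by (rule prec_elim)
  have fh: "f \<in> hom C A B" "f' \<in> hom C A B" using prec_hom[OF ff] by auto
  have FA: "mtens C F (idm C A') \<in> hom C (otens C A A') (otens C B (otens C X A'))"
    using tens_hom[OF F id_hom[of A']] by simp
  have W: "cmp C (mtens C (idm C B) (symm C X A')) (mtens C F (idm C A')) \<in> hom C (otens C A A') (otens C (otens C B A') X)"
    using comp_hom[OF FA whisk_hom[OF symm_hom[of X A'], of B]] by simp
  show ?thesis
    by (rule prec_intro[OF tens_hom[OF fh(1) id_hom] tens_hom[OF fh(2) id_hom] W f0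
          rw_dil[OF F f0, symmetric, folded f] rw_dil[OF F disc_hom, symmetric, folded f']])
qed

lemma prec_lw: assumes gg: "preceq C A' B' g g'"
  shows "preceq C (otens C B A') (otens C B B') (mtens C (idm C B) g) (mtens C (idm C B) g')"
proof -
  obtain Y G g0 where G: "G \<in> hom C A' (otens C B' Y)" and g0: "g0 \<in> hom C Y (unit_obj C)"
    and g: "g = cmp C (mtens C (idm C B') g0) G" and g': "g' = cmp C (mtens C (idm C B') (disc C Y)) G"
    using gg by (rule prec_elim)
  have gh: "g \<in> hom C A' B'" "g' \<in> hom C A' B'" using prec_hom[OF gg] by auto
  have W: "mtens C (idm C B) G \<in> hom C (otens C B A') (otens C (otens C B B') Y)"
    using whisk_hom[OF G, of B] by simp
  have gen: "cmp C (mtens C (idm C (otens C B B')) e) (mtens C (idm C B) G)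
     = mtens C (idm C B) (cmp C (mtens C (idm C B') e) G)" if e: "e \<in> hom C Y (unit_obj C)" for e
  proof -
    have "mtens C (idm C (otens C B B')) e = mtens C (idm C B) (mtens C (idm C B') e)"
      unfolding tens_id[of B B', symmetric] by (rule tens_assoc[OF hom_arr[OF id_hom] hom_arr[OF id_hom] hom_arr[OF e]])
    then show ?thesis using whisk_comp[OF G whisk_hom[OF e, of B'], of B] by simp
  qed
  show ?thesis
    by (rule prec_intro[OF whisk_hom[OF gh(1)] whisk_hom[OF gh(2)] W g0
          gen[OF g0, symmetric, folded g] gen[OF disc_hom, symmetric, folded g']])
qed

lemma tens_split: assumes f: "f \<in> hom C A B" and g: "g \<in> hom C A' B'"
  shows "mtens C f g = cmp C (mtens C (idm C B) g) (mtens C f (idm C A'))"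
  using tens_interchange[OF f id_hom id_hom g] id_left[OF f] id_right[OF g] by simp

lemma prec_tens: assumes ff: "preceq C A B f f'" and gg: "preceq C A' B' g g'"
  shows "preceq C (otens C A A') (otens C B B') (mtens C f g) (mtens C f' g')"
proof -
  have fh: "f \<in> hom C A B" "f' \<in> hom C A B" using prec_hom[OF ff] by auto
  have gh: "g \<in> hom C A' B'" "g' \<in> hom C A' B'" using prec_hom[OF gg] by auto
  show ?thesis
    using prec_comp[OF prec_rw[OF ff, of A'] prec_lw[OF gg, of B]]
    unfolding tens_split[OF fh(1) gh(1)] tens_split[OF fh(2) gh(2)] .
qed

end

theorem lemma5:
  fixes C :: "('o, 'm) smcat"
  assumes "discard_category C" and "pseudo_purifiable C"
  shows "(\<forall>A B f. f \<in> hom C A B \<longrightarrow> preceq C A B f f)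
    \<and> (\<forall>A B f g h. preceq C A B f g \<and> preceq C A B g h \<longrightarrow> preceq C A B f h)
    \<and> (\<forall>A B D f f' g g'. preceq C A B f f' \<and> preceq C B D g g'
          \<longrightarrow> preceq C A D (cmp C g f) (cmp C g' f'))
    \<and> (\<forall>A B A' B' f f' g g'. preceq C A B f f' \<and> preceq C A' B' g g'
          \<longrightarrow> preceq C (otens C A A') (otens C B B') (mtens C f g) (mtens C f' g'))"
proof -
  interpret discard_category C by (rule assms(1))
  show ?thesis
  proof (intro conjI allI impI)
    show "preceq C A B f f" if "f \<in> hom C A B" for A B f using prec_refl[OF that] .
    show "preceq C A B f h" if "preceq C A B f g \<and> preceq C A B g h" for A B f g h
      using prec_trans[OF assms(2)] that by blast
    show "preceq C A D (cmp C g f) (cmp C g' f')" if "preceq C A B f f' \<and> preceq C B D g g'"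
      for A B D f f' g g' using prec_comp that by blast
    show "preceq C (otens C A A') (otens C B B') (mtens C f g) (mtens C f' g')"
      if "preceq C A B f f' \<and> preceq C A' B' g g'" for A B A' B' f f' g g'
      using prec_tens that by blast
  qed
qed

end
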